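(* Let $X$ be a non-empty presheaf of sets on $\mathscr{V}_f$ which is finite of degree $d$. Then (1) $|X(V)|<\infty$ for every finite-dimensional $V$; (2) $\gamma_X(t)=O(t^d)$.
   Context: $p$ prime, $\mathbb{F}=\mathbb{F}_p$, $\mathscr{V}_f$ finite-dimensional $\mathbb{F}$-vector spaces. $\mathscr{F}$ is the abelian category of functors $\mathscr{V}_f^{\mathrm{op}}\to$ ($\mathbb{F}$-vector spaces); $\mathbb{F}[X]$ is sectionwise linearization and $q_n$ is the left adjoint of the inclusion of functors of Eilenberg–MacLane polynomial degree $\le n$. A presheaf $X$ is finite if it embeds in a functor of $\mathscr{F}$ with a finite composition series; its degree is the least $n$ such that $X\to\mathbb{F}[X]\to q_n\mathbb{F}[X]$ is a monomorphism (equivalently the least polynomial degree of a finite functor into which $X$ embeds). The growth function is $\gamma_X(t)=\log_p|X(\mathbb{F}^t)|$ for $t\in\mathbb{N}$. *)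

theory Defs
  imports "Jordan_Normal_Form.Matrix" "HOL-Library.Landau_Symbols"
begin

text \<open>The base field is a finite field type 'k of prime cardinality p
(i.e. F_p). The category V_f is represented by its skeleton: objects are the
natural numbers n (standing for F^n), and a morphism F^m -> F^n is a matrix
A in carrier_mat n m (n rows, m columns); composition is matrix product and the
identity of F^n is 1_m n.\<close>

definition presheaf :: "(nat \<Rightarrow> 'a set) \<Rightarrow> ('k::field mat \<Rightarrow> 'a \<Rightarrow> 'a) \<Rightarrow> bool" where
  "presheaf X Xmap \<longleftrightarrow>
     (\<forall>n m A. A \<in> carrier_mat n m \<longrightarrow> (\<forall>x\<in>X n. Xmap A x \<in> X m)) \<and>
     (\<forall>n. \<forall>x\<in>X n. Xmap (1\<^sub>m n) x = x) \<and>
     (\<forall>n m l A B. A \<in> carrier_mat n m \<longrightarrow> B \<in> carrier_mat m l \<longrightarrow>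
        (\<forall>x\<in>X n. Xmap (A * B) x = Xmap B (Xmap A x)))"

text \<open>Vectors of the values of a functor in the category F are modelled as elements of
the F-vector space nat => 'k (pointwise operations); each value is a subspace.\<close>
definition vzero :: "nat \<Rightarrow> 'k::field" where "vzero = (\<lambda>_. 0)"

definition subspace_k :: "(nat \<Rightarrow> 'k::field) set \<Rightarrow> bool" where
  "subspace_k S \<longleftrightarrow> vzero \<in> S \<and>
     (\<forall>x\<in>S. \<forall>y\<in>S. (\<lambda>i. x i + y i) \<in> S) \<and>
     (\<forall>c. \<forall>x\<in>S. (\<lambda>i. c * x i) \<in> S)"

definition linear_on_k :: "(nat \<Rightarrow> 'k::field) set \<Rightarrow> ((nat \<Rightarrow> 'k) \<Rightarrow> (nat \<Rightarrow> 'k)) \<Rightarrow> bool" where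
  "linear_on_k S f \<longleftrightarrow>
     (\<forall>x\<in>S. \<forall>y\<in>S. f (\<lambda>i. x i + y i) = (\<lambda>i. f x i + f y i)) \<and>
     (\<forall>c. \<forall>x\<in>S. f (\<lambda>i. c * x i) = (\<lambda>i. c * f x i))"

definition vfunctor :: "(nat \<Rightarrow> (nat \<Rightarrow> 'k::field) set) \<Rightarrow> ('k mat \<Rightarrow> (nat \<Rightarrow> 'k) \<Rightarrow> (nat \<Rightarrow> 'k)) \<Rightarrow> bool" where
  "vfunctor F Fmap \<longleftrightarrow>
     (\<forall>n. subspace_k (F n)) \<and>
     (\<forall>n m A. A \<in> carrier_mat n m \<longrightarrow> (\<forall>x\<in>F n. Fmap A x \<in> F m) \<and> linear_on_k (F n) (Fmap A)) \<and>
     (\<forall>n. \<forall>x\<in>F n. Fmap (1\<^sub>m n) x = x) \<and>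
     (\<forall>n m l A B. A \<in> carrier_mat n m \<longrightarrow> B \<in> carrier_mat m l \<longrightarrow>
        (\<forall>x\<in>F n. Fmap (A * B) x = Fmap B (Fmap A x)))"

definition subfunctor :: "(nat \<Rightarrow> (nat \<Rightarrow> 'k::field) set) \<Rightarrow> (nat \<Rightarrow> (nat \<Rightarrow> 'k) set) \<Rightarrow> ('k mat \<Rightarrow> (nat \<Rightarrow> 'k) \<Rightarrow> (nat \<Rightarrow> 'k)) \<Rightarrow> bool" where
  "subfunctor G F Fmap \<longleftrightarrow>
     (\<forall>n. subspace_k (G n) \<and> G n \<subseteq> F n) \<and>
     (\<forall>n m A. A \<in> carrier_mat n m \<longrightarrow> (\<forall>x\<in>G n. Fmap A x \<in> G m))"

text \<open>A finite functor: one admitting a finite composition series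
0 = G_0 < G_1 < ... < G_k = F of subfunctors with simple subquotients
(i.e. no subfunctor strictly between consecutive terms).\<close>
definition finite_functor :: "(nat \<Rightarrow> (nat \<Rightarrow> 'k::field) set) \<Rightarrow> ('k mat \<Rightarrow> (nat \<Rightarrow> 'k) \<Rightarrow> (nat \<Rightarrow> 'k)) \<Rightarrow> bool" where
  "finite_functor F Fmap \<longleftrightarrow> vfunctor F Fmap \<and>
     (\<exists>k (Gs :: nat \<Rightarrow> nat \<Rightarrow> (nat \<Rightarrow> 'k) set).
        Gs 0 = (\<lambda>n. {vzero}) \<and> Gs k = F \<and>
        (\<forall>i\<le>k. subfunctor (Gs i) F Fmap) \<and>
        (\<forall>i<k. Gs i < Gs (Suc i) \<and>
           \<not> (\<exists>H. subfunctor H F Fmap \<and> Gs i < H \<and> H < Gs (Suc i))))"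

text \<open>Inclusion of F^(N - (b - a)) into F^N omitting the coordinate block [a, b).\<close>
definition incl_omit :: "nat \<Rightarrow> nat \<Rightarrow> nat \<Rightarrow> 'k::{zero,one} mat" where
  "incl_omit N a b = mat N (N - (b - a))
     (\<lambda>(r, c). if (c < a \<and> r = c) \<or> (a \<le> c \<and> r = c + (b - a)) then 1 else 0)"

text \<open>Eilenberg-MacLane cross effect cr_k F(F^(ms!0), ..., F^(ms!(k-1))) of a
contravariant functor: the intersection, over the summands i, of the kernels of
F applied to the inclusion of the sum of the other summands.\<close>
definition cross_effect :: "(nat \<Rightarrow> (nat \<Rightarrow> 'k::field) set) \<Rightarrow> ('k mat \<Rightarrow> (nat \<Rightarrow> 'k) \<Rightarrow> (nat \<Rightarrow> 'k)) \<Rightarrow> nat list \<Rightarrow> (nat \<Rightarrow> 'k) set" where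
  "cross_effect F Fmap ms =
     {x \<in> F (sum_list ms). \<forall>i<length ms.
        Fmap (incl_omit (sum_list ms) (sum_list (take i ms)) (sum_list (take (Suc i) ms))) x = vzero}"

definition poly_degree_le :: "(nat \<Rightarrow> (nat \<Rightarrow> 'k::field) set) \<Rightarrow> ('k mat \<Rightarrow> (nat \<Rightarrow> 'k) \<Rightarrow> (nat \<Rightarrow> 'k)) \<Rightarrow> nat \<Rightarrow> bool" where
  "poly_degree_le F Fmap n \<longleftrightarrow> (\<forall>ms. length ms = Suc n \<longrightarrow> cross_effect F Fmap ms = {vzero})"

definition embeds_into :: "(nat \<Rightarrow> 'a set) \<Rightarrow> ('k::field mat \<Rightarrow> 'a \<Rightarrow> 'a) \<Rightarrow> (nat \<Rightarrow> (nat \<Rightarrow> 'k) set) \<Rightarrow> ('k mat \<Rightarrow> (nat \<Rightarrow> 'k) \<Rightarrow> (nat \<Rightarrow> 'k)) \<Rightarrow> (nat \<Rightarrow> 'a \<Rightarrow> (nat \<Rightarrow> 'k)) \<Rightarrow> bool" where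
  "embeds_into X Xmap F Fmap \<eta> \<longleftrightarrow>
     (\<forall>n. inj_on (\<eta> n) (X n) \<and> (\<forall>x\<in>X n. \<eta> n x \<in> F n)) \<and>
     (\<forall>n m A. A \<in> carrier_mat n m \<longrightarrow> (\<forall>x\<in>X n. \<eta> m (Xmap A x) = Fmap A (\<eta> n x)))"

definition finite_deg_le :: "(nat \<Rightarrow> 'a set) \<Rightarrow> ('k::field mat \<Rightarrow> 'a \<Rightarrow> 'a) \<Rightarrow> nat \<Rightarrow> bool" where
  "finite_deg_le X Xmap d \<longleftrightarrow>
     (\<exists>(F :: nat \<Rightarrow> (nat \<Rightarrow> 'k) set) Fmap \<eta>. finite_functor F Fmap \<and> poly_degree_le F Fmap d
        \<and> embeds_into X Xmap F Fmap \<eta>)"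

definition finite_presheaf :: "(nat \<Rightarrow> 'a set) \<Rightarrow> ('k::field mat \<Rightarrow> 'a \<Rightarrow> 'a) \<Rightarrow> bool" where
  "finite_presheaf X Xmap \<longleftrightarrow>
     (\<exists>(F :: nat \<Rightarrow> (nat \<Rightarrow> 'k) set) Fmap \<eta>. finite_functor F Fmap \<and> embeds_into X Xmap F Fmap \<eta>)"

definition finite_of_degree :: "(nat \<Rightarrow> 'a set) \<Rightarrow> ('k::field mat \<Rightarrow> 'a \<Rightarrow> 'a) \<Rightarrow> nat \<Rightarrow> bool" where
  "finite_of_degree X Xmap d \<longleftrightarrow> finite_presheaf X Xmap \<and>
     finite_deg_le X Xmap d \<and> (\<forall>e<d. \<not> finite_deg_le X Xmap e)"

end

theory Submission
  imports Defs
begin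

definition sel :: "nat \<Rightarrow> (nat \<Rightarrow> nat) \<Rightarrow> nat \<Rightarrow> 'k::field mat" where
  "sel N g k = mat N k (\<lambda>(r, c). if r = g c then 1 else 0)"

lemma sel_carrier[simp]: "sel N g k \<in> carrier_mat N k"
  by (simp add: sel_def)

lemma sel_mult:
  assumes "h ` {..<j} \<subseteq> {..<k}"
  shows "(sel N g k :: 'k::field mat) * sel k h j = sel N (g \<circ> h) j"
proof (rule eq_matI)
  fix r c assume r: "r < dim_row (sel N (g \<circ> h) j :: 'k mat)" and c: "c < dim_col (sel N (g \<circ> h) j :: 'k mat)"
  hence r': "r < N" and c': "c < j" by (auto simp: sel_def)
  have hc: "h c < k" using assms c' by auto
  have "(sel N g k * sel k h j :: 'k mat) $$ (r, c)
      = (\<Sum>l\<in>{0..<k}. (if r = g l then 1 else 0) * (if l = h c then 1 else 0 :: 'k))"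
    using r' c' by (simp add: sel_def scalar_prod_def)
  also have "\<dots> = (\<Sum>l\<in>{0..<k}. if l = h c then (if r = g (h c) then 1 else 0) else 0 :: 'k)"
    by (rule sum.cong) simp_all
  also have "\<dots> = (if r = g (h c) then 1 else 0)" using hc by simp
  finally show "(sel N g k * sel k h j :: 'k mat) $$ (r, c) = sel N (g \<circ> h) j $$ (r, c)"
    using r' c' by (simp add: sel_def)
qed (simp_all add: sel_def)

lemma sel_id: "(sel N id N :: 'k::field mat) = 1\<^sub>m N"
  by (rule eq_matI) (auto simp: sel_def)

lemma sel_restrict: "(sel N g k :: 'k::field mat) = sel N (restrict g {..<k}) k"
  by (rule eq_matI) (auto simp: sel_def)

lemma incl_omit_sel: "(incl_omit N a b :: 'k::field mat) = sel N (\<lambda>c. if c < a then c else c + (b - a)) (N - (b - a))"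
  unfolding incl_omit_def sel_def by (rule arg_cong[where f="mat _ _"]) (auto simp: fun_eq_iff)

lemma finite_carrier_mat: "finite (carrier_mat m n :: 'k::finite mat set)"
proof -
  let ?S = "({..<m} \<times> {..<n}) \<rightarrow>\<^sub>E (UNIV :: 'k set)"
  have "carrier_mat m n \<subseteq> (\<lambda>f. mat m n f) ` ?S"
  proof
    fix A :: "'k mat" assume A: "A \<in> carrier_mat m n"
    have dr: "dim_row A = m" and dc: "dim_col A = n" using A by auto
    let ?f = "restrict (\<lambda>(i,j). A $$ (i,j)) ({..<m} \<times> {..<n})"
    have "A = mat m n ?f"
    proof (rule eq_matI)
      fix i j assume "i < dim_row (mat m n ?f)" "j < dim_col (mat m n ?f)"
      hence "i < m" "j < n" by simp_all
      thus "A $$ (i, j) = mat m n ?f $$ (i, j)" by simp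
    qed (simp_all add: dr dc)
    moreover have "?f \<in> ?S" by simp
    ultimately show "A \<in> (\<lambda>f. mat m n f) ` ?S" by (rule image_eqI)
  qed
  moreover have "finite ?S" by (rule finite_PiE) simp_all
  ultimately show ?thesis by (rule finite_subset[OF _ finite_imageI])
qed

lemma lin_zero:
  assumes "linear_on_k V f" "subspace_k V"
  shows "f vzero = vzero"
proof -
  have v0: "vzero \<in> V" using assms(2) by (simp add: subspace_k_def)
  have e: "(\<lambda>i. (0::'a) * vzero i) = vzero" by (simp add: vzero_def)
  have "f (\<lambda>i. 0 * vzero i) = (\<lambda>i. 0 * f vzero i)"
    using assms(1) v0 unfolding linear_on_k_def by blast
  thus ?thesis by (simp add: e vzero_def)
qed

lemma sub_add: "subspace_k V \<Longrightarrow> x \<in> V \<Longrightarrow> y \<in> V \<Longrightarrow> (\<lambda>i. x i + y i) \<in> V"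
  unfolding subspace_k_def by blast
lemma sub_smult: "subspace_k V \<Longrightarrow> x \<in> V \<Longrightarrow> (\<lambda>i. c * x i) \<in> V"
  unfolding subspace_k_def by blast
lemma lin_add: "linear_on_k V f \<Longrightarrow> x \<in> V \<Longrightarrow> y \<in> V \<Longrightarrow> f (\<lambda>i. x i + y i) = (\<lambda>i. f x i + f y i)"
  unfolding linear_on_k_def by blast
lemma lin_smult: "linear_on_k V f \<Longrightarrow> x \<in> V \<Longrightarrow> f (\<lambda>i. c * x i) = (\<lambda>i. c * f x i)"
  unfolding linear_on_k_def by blast

lemma sub_sum:
  assumes "subspace_k V" "finite S" "\<forall>A\<in>S. v A \<in> V"
  shows "(\<lambda>i. \<Sum>A\<in>S. c A * v A i) \<in> V"
  using assms(2,3)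
proof (induction S rule: finite_induct)
  case empty
  then show ?case using assms(1) by (simp add: subspace_k_def vzero_def)
next
  case (insert a S)
  have 1: "(\<lambda>i. c a * v a i) \<in> V" using assms(1) insert by (simp add: subspace_k_def)
  have 2: "(\<lambda>i. \<Sum>A\<in>S. c A * v A i) \<in> V" using insert by simp
  show ?case using sub_add[OF assms(1) 1 2] insert by simp
qed

lemma lin_sum:
  assumes "linear_on_k V f" "subspace_k V" "finite S" "\<forall>A\<in>S. v A \<in> V"
  shows "f (\<lambda>i. \<Sum>A\<in>S. c A * v A i) = (\<lambda>i. \<Sum>A\<in>S. c A * f (v A) i)"
  using assms(3,4)
proof (induction S rule: finite_induct)
  case empty
  have "(\<lambda>i. \<Sum>A\<in>{}. c A * v A i) = vzero" by (simp add: vzero_def)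
  then show ?case using lin_zero[OF assms(1,2)] by (simp add: vzero_def)
next
  case (insert a S)
  have 1: "(\<lambda>i. c a * v a i) \<in> V" using assms(2) insert by (simp add: subspace_k_def)
  have 2: "(\<lambda>i. \<Sum>A\<in>S. c A * v A i) \<in> V" by (intro sub_sum[OF assms(2)]) (use insert in auto)
  have "f (\<lambda>i. (\<lambda>i. c a * v a i) i + (\<lambda>i. \<Sum>A\<in>S. c A * v A i) i)
      = (\<lambda>i. f (\<lambda>i. c a * v a i) i + f (\<lambda>i. \<Sum>A\<in>S. c A * v A i) i)"
    by (rule lin_add[OF assms(1) 1 2])
  also have "f (\<lambda>i. c a * v a i) = (\<lambda>i. c a * f (v a) i)"
    using assms(1) insert unfolding linear_on_k_def by blast
  finally show ?case using insert by simp
qed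

lemma vf_sub: "vfunctor F Fmap \<Longrightarrow> subspace_k (F n)"
  by (simp add: vfunctor_def)
lemma vf_in: "vfunctor F Fmap \<Longrightarrow> A \<in> carrier_mat n m \<Longrightarrow> x \<in> F n \<Longrightarrow> Fmap A x \<in> F m"
  unfolding vfunctor_def by blast
lemma vf_lin: "vfunctor F Fmap \<Longrightarrow> A \<in> carrier_mat n m \<Longrightarrow> linear_on_k (F n) (Fmap A)"
  unfolding vfunctor_def by blast
lemma vf_id: "vfunctor F Fmap \<Longrightarrow> x \<in> F n \<Longrightarrow> Fmap (1\<^sub>m n) x = x"
  unfolding vfunctor_def by blast
lemma vf_comp: "vfunctor F Fmap \<Longrightarrow> A \<in> carrier_mat n m \<Longrightarrow> B \<in> carrier_mat m l \<Longrightarrow> x \<in> F n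
   \<Longrightarrow> Fmap (A * B) x = Fmap B (Fmap A x)"
  unfolding vfunctor_def by blast

lemma restr_eq:
  fixes F :: "nat \<Rightarrow> (nat \<Rightarrow> 'k::field) set"
  assumes vf: "vfunctor F Fmap" and pd: "poly_degree_le F Fmap d"
    and x: "x \<in> F N" and x': "x' \<in> F N"
    and eq: "\<And>k g. k \<le> d \<Longrightarrow> g \<in> {..<k} \<rightarrow>\<^sub>E {..<N} \<Longrightarrow> Fmap (sel N g k) x = Fmap (sel N g k) x'"
  shows "x = x'"
proof -
  define z where "z = (\<lambda>i. x i + (-1) * x' i)"
  have sN: "subspace_k (F N)" using vf_sub[OF vf] .
  have m1: "(\<lambda>i. (-1) * x' i) \<in> F N" by (rule sub_smult[OF sN x'])
  have zF: "z \<in> F N" using sub_add[OF sN x m1] by (simp add: z_def)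
  have Fz: "Fmap A z = (\<lambda>i. Fmap A x i + (-1) * Fmap A x' i)" if A: "A \<in> carrier_mat N m" for A m
  proof -
    have L: "linear_on_k (F N) (Fmap A)" using vf_lin[OF vf A] .
    have "Fmap A z = Fmap A (\<lambda>i. x i + (\<lambda>i. (-1) * x' i) i)" by (simp add: z_def)
    also have "\<dots> = (\<lambda>i. Fmap A x i + Fmap A (\<lambda>i. (-1) * x' i) i)"
      using lin_add[OF L x m1] by simp
    also have "Fmap A (\<lambda>i. (-1) * x' i) = (\<lambda>i. (-1) * Fmap A x' i)"
      by (rule lin_smult[OF L x'])
    finally show ?thesis .
  qed
  have claim: "\<forall>g. g ` {..<k} \<subseteq> {..<N} \<longrightarrow> Fmap (sel N g k) z = vzero" for k
  proof (induction k rule: less_induct)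
    case (less k)
    show ?case
    proof (intro allI impI)
      fix g assume g: "g ` {..<k} \<subseteq> {..<N}"
      show "Fmap (sel N g k) z = vzero"
      proof (cases "k \<le> d")
        case True
        have "restrict g {..<k} \<in> {..<k} \<rightarrow>\<^sub>E {..<N}" using g by auto
        hence "Fmap (sel N g k) x = Fmap (sel N g k) x'" using eq[OF True] sel_restrict by metis
        then show ?thesis using Fz[OF sel_carrier] by (simp add: vzero_def fun_eq_iff)
      next
        case False
        define ms where "ms = replicate d 1 @ [k - d]"
        have len: "length ms = Suc d" by (simp add: ms_def)
        have sm: "sum_list ms = k" using False by (simp add: ms_def sum_list_replicate)
        have pos: "\<forall>a\<in>set ms. a \<ge> 1" using False by (auto simp: ms_def)
        define y where "y = Fmap (sel N g k) z"
        have yF: "y \<in> F k" unfolding y_def by (rule vf_in[OF vf sel_carrier zF])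
        have ker: "Fmap (incl_omit k (sum_list (take i ms)) (sum_list (take (Suc i) ms))) y = vzero"
          if i: "i < length ms" for i
        proof -
          define a where "a = sum_list (take i ms)"
          define b where "b = sum_list (take (Suc i) ms)"
          have tk: "take (Suc i) ms = take i ms @ [ms ! i]" using i by (rule take_Suc_conv_app_nth)
          have "ms ! i \<ge> 1" using pos i by simp
          hence ab: "a < b" unfolding a_def b_def tk by simp
          have "sum_list ms = b + sum_list (drop (Suc i) ms)"
            unfolding b_def by (metis append_take_drop_id sum_list_append)
          hence bk: "b \<le> k" using sm by simp
          define k' where "k' = k - (b - a)"
          define h where "h = (\<lambda>c. if c < a then c else c + (b - a))"
          have kk: "k' < k" using ab bk by (simp add: k'_def)
          have hk: "h ` {..<k'} \<subseteq> {..<k}" using ab bk by (auto simp: h_def k'_def)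
          have gh: "(g \<circ> h) ` {..<k'} \<subseteq> {..<N}" using hk g by auto
          have "Fmap (incl_omit k a b) y = Fmap (sel k h k') y" by (simp add: incl_omit_sel h_def k'_def)
          also have "\<dots> = Fmap (sel N g k * sel k h k') z"
            unfolding y_def by (rule vf_comp[OF vf sel_carrier sel_carrier zF, symmetric])
          also have "\<dots> = Fmap (sel N (g \<circ> h) k') z" by (simp add: sel_mult[OF hk])
          also have "\<dots> = vzero" using less.IH[OF kk] gh by blast
          finally show ?thesis by (simp add: a_def b_def)
        qed
        have "y \<in> cross_effect F Fmap ms"
          unfolding cross_effect_def using yF ker by (simp add: sm)
        then show ?thesis using pd len unfolding poly_degree_le_def y_def by blast
      qed
    qed
  qed
  have "z = vzero" using claim[of N, rule_format, of id] vf_id[OF vf zF] by (simp add: sel_id)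
  then show ?thesis by (simp add: z_def vzero_def fun_eq_iff)
qed

lemma regroup:
  fixes c :: "'k::field mat \<Rightarrow> 'k" and f :: "'k mat \<Rightarrow> 'k"
  assumes "finite S" "finite T" "\<And>A. A \<in> S \<Longrightarrow> A * B \<in> T"
  shows "(\<Sum>A\<in>S. c A * f (A * B)) = (\<Sum>A'\<in>T. (\<Sum>A\<in>{A\<in>S. A * B = A'}. c A) * f A')"
proof -
  have "(\<Sum>A\<in>S. c A * f (A * B)) = (\<Sum>A'\<in>T. \<Sum>A\<in>{A\<in>S. A * B = A'}. c A * f (A * B))"
    using assms by (intro sum.group[symmetric]) auto
  also have "\<dots> = (\<Sum>A'\<in>T. \<Sum>A\<in>{A\<in>S. A * B = A'}. c A * f A')"
    by (intro sum.cong refl) auto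
  also have "\<dots> = (\<Sum>A'\<in>T. (\<Sum>A\<in>{A\<in>S. A * B = A'}. c A) * f A')"
    by (simp add: sum_distrib_right)
  finally show ?thesis .
qed

lemma simple_step:
  fixes F :: "nat \<Rightarrow> (nat \<Rightarrow> 'k::{field,finite}) set"
  assumes vf: "vfunctor F Fmap" and G: "subfunctor G F Fmap" and G': "subfunctor G' F Fmap"
    and lt: "G < G'" and nb: "\<not> (\<exists>H. subfunctor H F Fmap \<and> G < H \<and> H < G')"
    and fin: "\<forall>n. finite (G n)"
  shows "finite (G' n)"
proof -
  have le: "G n \<subseteq> G' n" for n using lt by (simp add: less_fun_def le_fun_def)
  have "G \<noteq> G'" using lt by simp
  then obtain m where "G m \<noteq> G' m" by blast
  with le obtain x where xG': "x \<in> G' m" and xG: "x \<notin> G m" by blast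
  have Gs: "subspace_k (G n)" "G n \<subseteq> F n" for n using G by (auto simp: subfunctor_def)
  have G's: "subspace_k (G' n)" "G' n \<subseteq> F n" for n using G' by (auto simp: subfunctor_def)
  have Gcl: "A \<in> carrier_mat n l \<Longrightarrow> u \<in> G n \<Longrightarrow> Fmap A u \<in> G l" for A n l u
    using G by (auto simp: subfunctor_def)
  have G'cl: "A \<in> carrier_mat n l \<Longrightarrow> u \<in> G' n \<Longrightarrow> Fmap A u \<in> G' l" for A n l u
    using G' by (auto simp: subfunctor_def)
  have xF: "x \<in> F m" using xG' G's(2) by blast
  define C :: "nat \<Rightarrow> 'k mat set" where "C n = carrier_mat m n" for n
  have Cfin: "finite (C n)" for n by (simp add: C_def finite_carrier_mat)
  define S where "S n c = (\<lambda>i. \<Sum>A\<in>C n. c A * Fmap A x i)" for n c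
  define H where "H n = {v. \<exists>u\<in>G n. \<exists>c. v = (\<lambda>i. u i + S n c i)}" for n
  have SG': "S n c \<in> G' n" for n c
    unfolding S_def by (rule sub_sum[OF G's(1) Cfin]) (auto simp: C_def intro: G'cl[OF _ xG'])
  have HG': "H n \<subseteq> G' n" for n
  proof
    fix v assume "v \<in> H n"
    then obtain u c where u: "u \<in> G n" and v: "v = (\<lambda>i. u i + S n c i)" unfolding H_def by blast
    show "v \<in> G' n" unfolding v by (rule sub_add[OF G's(1) _ SG']) (use u le in blast)
  qed
  have S0: "S n (\<lambda>_. 0) = vzero" for n by (simp add: S_def vzero_def)
  have GH: "G n \<subseteq> H n" for n
  proof
    fix u assume "u \<in> G n"
    moreover have "u = (\<lambda>i. u i + S n (\<lambda>_. 0) i)" by (simp add: S0 vzero_def)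
    ultimately show "u \<in> H n" unfolding H_def by blast
  qed
  have xH: "x \<in> H m"
  proof -
    have v0: "vzero \<in> G m" using Gs(1) by (simp add: subspace_k_def)
    have "S m (\<lambda>A. if A = 1\<^sub>m m then 1 else 0) = (\<lambda>i. Fmap (1\<^sub>m m) x i)"
    proof (unfold S_def, rule ext)
      fix i
      have "(\<Sum>A\<in>C m. (if A = 1\<^sub>m m then 1 else 0) * Fmap A x i)
          = (\<Sum>A\<in>C m. if A = 1\<^sub>m m then Fmap A x i else 0)"
        by (intro sum.cong) auto
      also have "\<dots> = Fmap (1\<^sub>m m) x i" using Cfin[of m] by (simp add: C_def)
      finally show "(\<Sum>A\<in>C m. (if A = 1\<^sub>m m then 1 else 0) * Fmap A x i) = Fmap (1\<^sub>m m) x i" .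
    qed
    hence "x = (\<lambda>i. vzero i + S m (\<lambda>A. if A = 1\<^sub>m m then 1 else 0) i)"
      using vf_id[OF vf xF] by (simp add: vzero_def)
    thus ?thesis unfolding H_def using v0 by blast
  qed
  have Hsub: "subfunctor H F Fmap"
    unfolding subfunctor_def
  proof (intro conjI allI impI ballI)
    fix n
    show "H n \<subseteq> F n" using HG' G's(2) by blast
    show "subspace_k (H n)" unfolding subspace_k_def
    proof (intro conjI ballI allI)
      show "vzero \<in> H n" using GH Gs(1) by (auto simp: subspace_k_def)
    next
      fix v w assume "v \<in> H n" "w \<in> H n"
      then obtain u c u' c' where u: "u \<in> G n" "v = (\<lambda>i. u i + S n c i)"
        and u': "u' \<in> G n" "w = (\<lambda>i. u' i + S n c' i)" unfolding H_def by blast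
      have "(\<lambda>i. v i + w i) = (\<lambda>i. (\<lambda>i. u i + u' i) i + S n (\<lambda>A. c A + c' A) i)"
        unfolding u u' S_def by (simp add: fun_eq_iff sum.distrib distrib_right algebra_simps)
      moreover have "(\<lambda>i. u i + u' i) \<in> G n" by (rule sub_add[OF Gs(1) u(1) u'(1)])
      ultimately show "(\<lambda>i. v i + w i) \<in> H n" unfolding H_def
        by (intro CollectI bexI[where x="\<lambda>i. u i + u' i"] exI[where x="\<lambda>A. c A + c' A"]) simp_all
    next
      fix a v assume "v \<in> H n"
      then obtain u c where u: "u \<in> G n" "v = (\<lambda>i. u i + S n c i)" unfolding H_def by blast
      have "(\<lambda>i. a * v i) = (\<lambda>i. (\<lambda>i. a * u i) i + S n (\<lambda>A. a * c A) i)"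
        unfolding u S_def by (simp add: fun_eq_iff sum_distrib_left distrib_left mult.assoc)
      moreover have "(\<lambda>i. a * u i) \<in> G n" by (rule sub_smult[OF Gs(1) u(1)])
      ultimately show "(\<lambda>i. a * v i) \<in> H n" unfolding H_def
        by (intro CollectI bexI[where x="\<lambda>i. a * u i"] exI[where x="\<lambda>A. a * c A"]) simp_all
    qed
  next
    fix n l and B :: "'k mat" and v assume B: "B \<in> carrier_mat n l" and "v \<in> H n"
    then obtain u c where u: "u \<in> G n" and v: "v = (\<lambda>i. u i + S n c i)" unfolding H_def by blast
    have L: "linear_on_k (F n) (Fmap B)" by (rule vf_lin[OF vf B])
    have uF: "u \<in> F n" using u Gs(2) by blast
    have SF: "S n c \<in> F n" using SG' G's(2) by blast
    have AxF: "\<forall>A\<in>C n. Fmap A x \<in> F n" using vf_in[OF vf _ xF] by (simp add: C_def)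
    have "Fmap B v = (\<lambda>i. Fmap B u i + Fmap B (S n c) i)" unfolding v by (rule lin_add[OF L uF SF])
    also have "Fmap B (S n c) = (\<lambda>i. \<Sum>A\<in>C n. c A * Fmap B (Fmap A x) i)"
      unfolding S_def by (rule lin_sum[OF L vf_sub[OF vf] Cfin AxF])
    also have "\<dots> = (\<lambda>i. \<Sum>A\<in>C n. c A * Fmap (A * B) x i)"
      using vf_comp[OF vf _ B xF] by (simp add: C_def)
    also have "\<dots> = S l (\<lambda>A'. \<Sum>A\<in>{A\<in>C n. A * B = A'}. c A)"
      unfolding S_def
    proof (rule ext)
      fix i
      show "(\<Sum>A\<in>C n. c A * Fmap (A * B) x i) = (\<Sum>A'\<in>C l. (\<Sum>A\<in>{A\<in>C n. A * B = A'}. c A) * Fmap A' x i)"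
        by (rule regroup[OF Cfin Cfin, where f="\<lambda>A. Fmap A x i"]) (use B in \<open>auto simp: C_def\<close>)
    qed
    finally have "Fmap B v = (\<lambda>i. Fmap B u i + S l (\<lambda>A'. \<Sum>A\<in>{A\<in>C n. A * B = A'}. c A) i)" .
    moreover have "Fmap B u \<in> G l" by (rule Gcl[OF B u])
    ultimately show "Fmap B v \<in> H l" unfolding H_def by blast
  qed
  have "G < H"
  proof -
    have "G \<le> H" using GH by (simp add: le_fun_def)
    moreover have "G \<noteq> H" using xH xG by auto
    ultimately show ?thesis by simp
  qed
  moreover have "H \<le> G'" using HG' by (simp add: le_fun_def)
  ultimately have "H = G'"
  proof -
    assume a1: "G < H" and a2: "H \<le> G'"
    show "H = G'"
    proof (rule ccontr)
      assume "H \<noteq> G'"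
      with a2 have "H < G'" by (simp add: less_le)
      with a1 Hsub nb show False by blast
    qed
  qed
  have "H n \<subseteq> (\<lambda>(u, c). (\<lambda>i. u i + S n c i)) ` (G n \<times> (C n \<rightarrow>\<^sub>E (UNIV :: 'k set)))"
  proof
    fix v assume "v \<in> H n"
    then obtain u c where u: "u \<in> G n" and v: "v = (\<lambda>i. u i + S n c i)" unfolding H_def by blast
    have "S n c = S n (restrict c (C n))" unfolding S_def by (intro ext sum.cong) auto
    hence "v = (\<lambda>(u, c). (\<lambda>i. u i + S n c i)) (u, restrict c (C n))" using v by simp
    moreover have "(u, restrict c (C n)) \<in> G n \<times> (C n \<rightarrow>\<^sub>E (UNIV :: 'k set))" using u by simp
    ultimately show "v \<in> (\<lambda>(u, c). (\<lambda>i. u i + S n c i)) ` (G n \<times> (C n \<rightarrow>\<^sub>E (UNIV :: 'k set)))"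
      by (rule image_eqI)
  qed
  moreover have "finite (G n \<times> (C n \<rightarrow>\<^sub>E (UNIV :: 'k set)))"
    using fin Cfin by (intro finite_cartesian_product finite_PiE) auto
  ultimately have "finite (H n)" by (rule finite_subset[OF _ finite_imageI])
  thus ?thesis using \<open>H = G'\<close> by simp
qed

lemma finite_functor_fin:
  fixes F :: "nat \<Rightarrow> (nat \<Rightarrow> 'k::{field,finite}) set"
  assumes "finite_functor F Fmap"
  shows "finite (F n)"
proof -
  have vf: "vfunctor F Fmap" using assms by (simp add: finite_functor_def)
  from assms obtain k and Gs :: "nat \<Rightarrow> nat \<Rightarrow> (nat \<Rightarrow> 'k) set" where
    g0: "Gs 0 = (\<lambda>n. {vzero})" and gk: "Gs k = F" and
    gs: "\<forall>i\<le>k. subfunctor (Gs i) F Fmap" and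
    st: "\<forall>i<k. Gs i < Gs (Suc i) \<and> \<not> (\<exists>H. subfunctor H F Fmap \<and> Gs i < H \<and> H < Gs (Suc i))"
    unfolding finite_functor_def by blast
  have "i \<le> k \<Longrightarrow> \<forall>n. finite (Gs i n)" for i
  proof (induction i)
    case 0
    then show ?case by (simp add: g0)
  next
    case (Suc i)
    hence IH: "\<forall>n. finite (Gs i n)" by simp
    have "i < k" using Suc by simp
    show ?case
    proof
      fix n
      show "finite (Gs (Suc i) n)"
        using simple_step[OF vf, of "Gs i" "Gs (Suc i)"] gs st IH \<open>i < k\<close> Suc.prems by auto
    qed
  qed
  thus ?thesis using gk by auto
qed

lemma card_bound:
  fixes F :: "nat \<Rightarrow> (nat \<Rightarrow> 'k::{field,finite}) set"
  assumes vf: "vfunctor F Fmap" and pd: "poly_degree_le F Fmap d" and finF: "\<And>n. finite (F n)"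
  shows "\<exists>M\<ge>1. \<forall>t\<ge>1. card (F t) \<le> M ^ ((d + 1) * t ^ d)"
proof -
  define W where "W = (\<Union>k\<le>d. F k)"
  have Wfin: "finite W" unfolding W_def using finF by auto
  have "vzero \<in> F 0" using vf_sub[OF vf] by (simp add: subspace_k_def)
  hence "W \<noteq> {}" unfolding W_def by blast
  hence M1: "card W \<ge> 1" using Wfin by (simp add: Suc_le_eq card_gt_0_iff)
  have "card (F t) \<le> card W ^ ((d + 1) * t ^ d)" if t: "t \<ge> 1" for t
  proof -
    define I where "I = (SIGMA k:{..d}. {..<k} \<rightarrow>\<^sub>E {..<t})"
    define \<Phi> where "\<Phi> v = (\<lambda>kg\<in>I. Fmap (sel t (snd kg) (fst kg)) v)" for v
    have Ifin: "finite I" unfolding I_def by (intro finite_SigmaI finite_PiE) auto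
    have "inj_on \<Phi> (F t)"
    proof (rule inj_onI)
      fix v v' assume v: "v \<in> F t" and v': "v' \<in> F t" and e: "\<Phi> v = \<Phi> v'"
      show "v = v'"
      proof (rule restr_eq[OF vf pd v v'])
        fix k g assume "k \<le> d" "g \<in> {..<k} \<rightarrow>\<^sub>E {..<t}"
        hence "(k, g) \<in> I" by (simp add: I_def)
        thus "Fmap (sel t g k) v = Fmap (sel t g k) v'"
          using fun_cong[OF e, of "(k, g)"] by (simp add: \<Phi>_def)
      qed
    qed
    moreover have "\<Phi> ` F t \<subseteq> I \<rightarrow>\<^sub>E W"
    proof
      fix w assume "w \<in> \<Phi> ` F t"
      then obtain v where v: "v \<in> F t" and w: "w = \<Phi> v" by blast
      have "Fmap (sel t (snd kg) (fst kg)) v \<in> W" if "kg \<in> I" for kg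
        using that vf_in[OF vf sel_carrier v] unfolding W_def I_def by (auto simp del: sel_carrier) blast
      thus "w \<in> I \<rightarrow>\<^sub>E W" unfolding w \<Phi>_def by auto
    qed
    ultimately have "card (F t) \<le> card (I \<rightarrow>\<^sub>E W)"
      by (metis card_image card_mono finite_PiE Ifin Wfin)
    also have "card (I \<rightarrow>\<^sub>E W) = card W ^ card I" using Ifin by (simp add: card_PiE)
    also have "card I = (\<Sum>k\<le>d. card ({..<k} \<rightarrow>\<^sub>E {..<t}))"
      unfolding I_def by (rule card_SigmaI) (auto intro: finite_PiE)
    also have "\<dots> = (\<Sum>k\<le>d. t ^ k)" by (simp add: card_PiE)
    also have "\<dots> \<le> (\<Sum>k\<le>d. t ^ d)" using t by (intro sum_mono power_increasing) auto
    also have "\<dots> = (d + 1) * t ^ d" by simp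
    finally show ?thesis using M1 power_increasing
      by (smt (verit, ccfv_SIG) le_trans)
  qed
  thus ?thesis using M1 by blast
qed

theorem proposition6p4:
  fixes p :: nat
    and X :: "nat \<Rightarrow> 'a set"
    and Xmap :: "'k::{field,finite} mat \<Rightarrow> 'a \<Rightarrow> 'a"
    and d :: nat
  assumes "prime p"
    and "card (UNIV :: 'k set) = p"
    and "presheaf X Xmap"
    and "\<exists>n. X n \<noteq> {}"
    and "finite_of_degree X Xmap d"
  shows "(\<forall>n. finite (X n)) \<and>
         (\<lambda>t. log (real p) (real (card (X t)))) \<in> O(\<lambda>t. real t ^ d)"
proof -
  from assms(5) obtain F :: "nat \<Rightarrow> (nat \<Rightarrow> 'k) set" and Fmap \<eta> where
    ff: "finite_functor F Fmap" and pd: "poly_degree_le F Fmap d" and emb: "embeds_into X Xmap F Fmap \<eta>"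
    unfolding finite_of_degree_def finite_deg_le_def by blast
  have vf: "vfunctor F Fmap" using ff by (simp add: finite_functor_def)
  have finF: "finite (F n)" for n by (rule finite_functor_fin[OF ff])
  have inj: "inj_on (\<eta> n) (X n)" and sub: "\<eta> n ` X n \<subseteq> F n" for n
    using emb unfolding embeds_into_def by auto
  have Xfin: "finite (X n)" for n
    using finite_imageD[OF finite_subset[OF sub finF] inj] .
  have cardX: "card (X n) \<le> card (F n)" for n
    using card_inj_on_le[OF inj sub finF] .
  obtain M :: nat where M1: "M \<ge> 1" and bd: "\<And>t. t \<ge> 1 \<Longrightarrow> card (F t) \<le> M ^ ((d + 1) * t ^ d)"
    using card_bound[OF vf pd finF] by blast
  have "p \<noteq> 0" "p \<noteq> 1" using assms(1) not_prime_0 not_prime_1 by metis+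
  hence p1: "real p > 1" by simp
  have lM: "log (real p) (real M) \<ge> 0" using M1 p1 by simp
  define c where "c = real (d + 1) * log (real p) (real M)"
  have c0: "c \<ge> 0" using lM by (simp add: c_def)
  have "eventually (\<lambda>t. norm (log (real p) (real (card (X t)))) \<le> c * norm (real t ^ d)) at_top"
  proof (rule eventually_at_top_linorderI[of 1])
    fix t :: nat assume t: "t \<ge> 1"
    show "norm (log (real p) (real (card (X t)))) \<le> c * norm (real t ^ d)"
    proof (cases "card (X t) = 0")
      case True
      then show ?thesis using c0 by (simp add: log_def)
    next
      case False
      have le: "real (card (X t)) \<le> real M ^ ((d + 1) * t ^ d)"
        using le_trans[OF cardX bd[OF t]] by (metis of_nat_le_iff of_nat_power)
      have pos: "0 < real (card (X t))" using False by simp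
      have "log (real p) (real (card (X t))) \<le> log (real p) (real M ^ ((d + 1) * t ^ d))"
        using log_mono[OF p1 pos le] .
      also have "\<dots> = real ((d + 1) * t ^ d) * log (real p) (real M)"
        by (rule log_nat_power) simp
      also have "\<dots> = c * real t ^ d" by (simp add: c_def algebra_simps)
      finally have "log (real p) (real (card (X t))) \<le> c * real t ^ d" .
      moreover have "log (real p) (real (card (X t))) \<ge> 0" using False p1 by simp
      ultimately show ?thesis by simp
    qed
  qed
  hence "(\<lambda>t. log (real p) (real (card (X t)))) \<in> O(\<lambda>t. real t ^ d)" by (rule bigoI)
  thus ?thesis using Xfin by blast
qed

end
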